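(* For every Borel subset $A$ of $\mathbb N^{\mathbb N}$ there exist $g\in\mathbb N^{\mathbb N}$ and $f\in\mathbf{Stp}$ with $A=[\![g]\!]^{\mathcal B}_f$; that is, the map $\mathbb N^{\mathbb N}\times\mathbf{Stp}\to\mathcal B$, $(g,f)\mapsto[\![g]\!]^{\mathcal B}_f$, is surjective onto the family $\mathcal B$ of Borel subsets of $\mathbb N^{\mathbb N}$.
   Context: $\mathbb N=\{1,2,\dots\}$, $\mathbb N^{\mathbb N}$ with the product of discrete topologies, $\mathcal B$ its Borel sets. $B^m_n=\{f: f(n)=m\}$. Fix any bijection $\langle\cdot,\cdot\rangle:\mathbb N\times\mathbb N\to\mathbb N\setminus\{1\}$, and for a finite tuple put $\langle\,\rangle=1$ and $\langle a_1a_2\cdots a_n\rangle=\langle a_1,\langle a_2\cdots a_n\rangle\rangle$, a bijection from finite tuples onto $\mathbb N$. For $k\in\mathbb N$: $[\![k]\!]^{\mathcal S'}=\mathbb N^{\mathbb N}\setminus B^m_n$ if $k=\langle 1mn\rangle$, $=B^m_n$ if $k=\langle 2mn\rangle$, $=\emptyset$ otherwise; if $k=\langle a_1\cdots a_K\rangle$ then $[\![k]\!]^{\mathcal S'_\cap}=\bigcap_{i\le K}[\![a_i]\!]^{\mathcal S'}$ (empty intersection $=\mathbb N^{\mathbb N}$) and $[\![k]\!]^{\mathcal A}=\bigcup_{i\le K}[\![a_i]\!]^{\mathcal S'_\cap}$ (empty union $=\emptyset$). For $f\in\mathbb N^{\mathbb N}$, $n\in\mathbb N$ let $f^{[n]}(m)=f(\langle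 n,m\rangle)$. The set $\mathbf{Stp}\subseteq\mathbb N^{\mathbb N}$ of stumps is defined inductively: if $f(1)\ne1$ then $f\in\mathbf{Stp}$; if $f(1)=1$ and $f^{[n]}\in\mathbf{Stp}$ for all $n$ then $f\in\mathbf{Stp}$. For $f\in\mathbf{Stp}$ and $g\in\mathbb N^{\mathbb N}$ define recursively: if $f(1)\neq1$, $[\![g]\!]^\Pi_f=\bigcap_{n\ge2}[\![g(n)]\!]^{\mathcal A}$ and $[\![g]\!]^\Sigma_f=\bigcup_{n\ge2}[\![g(n)]\!]^{\mathcal A}$; if $f(1)=1$, $[\![g]\!]^\Pi_f=\bigcap_{n}[\![g^{[n]}]\!]^\Sigma_{f^{[n]}}$ and $[\![g]\!]^\Sigma_f=\bigcup_{n}[\![g^{[n]}]\!]^\Pi_{f^{[n]}}$. Finally $[\![g]\!]^{\mathcal B}_f=[\![g]\!]^\Pi_f$ if $g(1)=37$ and $[\![g]\!]^{\mathcal B}_f=[\![g]\!]^\Sigma_f$ if $g(1)\neq37$. *)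

theory Defs
  imports "HOL-Analysis.Analysis"
begin

definition Npos :: "nat set" where "Npos = {1..}"

text \<open>Baire space N^N: extensional functions N -> N (value undefined off N).\<close>
definition Baire :: "(nat \<Rightarrow> nat) set" where "Baire = PiE Npos (\<lambda>_. Npos)"

definition Baire_top :: "(nat \<Rightarrow> nat) topology" where
  "Baire_top = product_topology (\<lambda>_. discrete_topology Npos) Npos"

definition Borel_Baire :: "(nat \<Rightarrow> nat) set set" where
  "Borel_Baire = sigma_sets (topspace Baire_top) {U. openin Baire_top U}"

definition Bmn :: "nat \<Rightarrow> nat \<Rightarrow> (nat \<Rightarrow> nat) set" where
  "Bmn m n = {f \<in> Baire. f n = m}"

fun tup :: "(nat \<times> nat \<Rightarrow> nat) \<Rightarrow> nat list \<Rightarrow> nat" where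
  "tup pr [] = 1"
| "tup pr (a # as) = pr (a, tup pr as)"

definition untup :: "(nat \<times> nat \<Rightarrow> nat) \<Rightarrow> nat \<Rightarrow> nat list" where
  "untup pr k = (THE xs. set xs \<subseteq> Npos \<and> tup pr xs = k)"

definition semS' :: "(nat \<times> nat \<Rightarrow> nat) \<Rightarrow> nat \<Rightarrow> (nat \<Rightarrow> nat) set" where
  "semS' pr k = (case untup pr k of
       [a, m, n] \<Rightarrow> (if a = 1 then Baire - Bmn m n else if a = 2 then Bmn m n else {})
     | _ \<Rightarrow> {})"

definition semScap :: "(nat \<times> nat \<Rightarrow> nat) \<Rightarrow> nat \<Rightarrow> (nat \<Rightarrow> nat) set" where
  "semScap pr k = Baire \<inter> (\<Inter>i<length (untup pr k). semS' pr (untup pr k ! i))"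

definition semA :: "(nat \<times> nat \<Rightarrow> nat) \<Rightarrow> nat \<Rightarrow> (nat \<Rightarrow> nat) set" where
  "semA pr k = (\<Union>i<length (untup pr k). semScap pr (untup pr k ! i))"

definition sect :: "(nat \<times> nat \<Rightarrow> nat) \<Rightarrow> (nat \<Rightarrow> nat) \<Rightarrow> nat \<Rightarrow> (nat \<Rightarrow> nat)" where
  "sect pr f n = restrict (\<lambda>m. f (pr (n, m))) Npos"

inductive_set Stp :: "(nat \<times> nat \<Rightarrow> nat) \<Rightarrow> (nat \<Rightarrow> nat) set" for pr where
  leaf: "f \<in> Baire \<Longrightarrow> f 1 \<noteq> 1 \<Longrightarrow> f \<in> Stp pr"
| node: "f \<in> Baire \<Longrightarrow> f 1 = 1 \<Longrightarrow> (\<forall>n\<in>Npos. sect pr f n \<in> Stp pr) \<Longrightarrow> f \<in> Stp pr"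

text \<open>SemPS pr f g P S: P = [[g]]^Pi_f and S = [[g]]^Sigma_f (defined by recursion on the stump f).\<close>
inductive SemPS :: "(nat \<times> nat \<Rightarrow> nat) \<Rightarrow> (nat \<Rightarrow> nat) \<Rightarrow> (nat \<Rightarrow> nat)
    \<Rightarrow> (nat \<Rightarrow> nat) set \<Rightarrow> (nat \<Rightarrow> nat) set \<Rightarrow> bool" for pr where
  leaf: "f 1 \<noteq> 1 \<Longrightarrow>
     SemPS pr f g (\<Inter>n\<in>Npos - {1}. semA pr (g n)) (\<Union>n\<in>Npos - {1}. semA pr (g n))"
| node: "f 1 = 1 \<Longrightarrow> (\<forall>n\<in>Npos. SemPS pr (sect pr f n) (sect pr g n) (P n) (S n)) \<Longrightarrow>
     SemPS pr f g (\<Inter>n\<in>Npos. S n) (\<Union>n\<in>Npos. P n)"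

definition semPi :: "(nat \<times> nat \<Rightarrow> nat) \<Rightarrow> (nat \<Rightarrow> nat) \<Rightarrow> (nat \<Rightarrow> nat) \<Rightarrow> (nat \<Rightarrow> nat) set" where
  "semPi pr f g = (THE P. \<exists>S. SemPS pr f g P S)"

definition semSigma :: "(nat \<times> nat \<Rightarrow> nat) \<Rightarrow> (nat \<Rightarrow> nat) \<Rightarrow> (nat \<Rightarrow> nat) \<Rightarrow> (nat \<Rightarrow> nat) set" where
  "semSigma pr f g = (THE S. \<exists>P. SemPS pr f g P S)"

definition semB :: "(nat \<times> nat \<Rightarrow> nat) \<Rightarrow> (nat \<Rightarrow> nat) \<Rightarrow> (nat \<Rightarrow> nat) \<Rightarrow> (nat \<Rightarrow> nat) set" where
  "semB pr f g = (if g 1 = 37 then semPi pr f g else semSigma pr f g)"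

end

theory Submission
  imports Defs
begin

lemma Npos_iff: "x \<in> Npos \<longleftrightarrow> 1 \<le> x" by (simp add: Npos_def)

lemma SemPS_unique:
  assumes "SemPS pr f g P S"
  shows "SemPS pr f g P' S' \<Longrightarrow> P = P' \<and> S = S'"
  using assms
proof (induction arbitrary: P' S' rule: SemPS.induct)
  case (leaf f g)
  from leaf.prems show ?case
    by (cases rule: SemPS.cases) (use leaf.hyps in auto)
next
  case (node f g P S)
  from node.prems show ?case
  proof (cases rule: SemPS.cases)
    case leaf
    then show ?thesis using node.hyps by simp
  next
    case (node P2 S2)
    have "\<forall>n\<in>Npos. P n = P2 n \<and> S n = S2 n" using node node.IH by blast
    then show ?thesis using node by (auto intro!: INF_cong SUP_cong)
  qed
qed

lemma Stp_Baire: "f \<in> Stp pr \<Longrightarrow> f \<in> Baire"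
  by (induction rule: Stp.induct) auto

fun cyl :: "(nat \<times> nat) list \<Rightarrow> (nat \<Rightarrow> nat) set" where
  "cyl [] = Baire"
| "cyl ((m, n) # L) = Bmn m n \<inter> cyl L"

lemma cyl_iff: "f \<in> cyl L \<longleftrightarrow> f \<in> Baire \<and> (\<forall>(m, n)\<in>set L. f n = m)"
  by (induction L rule: cyl.induct) (auto simp: Bmn_def)

definition lits :: "(nat \<Rightarrow> nat) set set" where
  "lits = {Bmn m n | m n. m \<in> Npos \<and> n \<in> Npos}"

lemma lits_Pow: "lits \<subseteq> Pow Baire"
  by (auto simp: lits_def Bmn_def)

lemma sa_lits: "sigma_algebra Baire (sigma_sets Baire lits)"
  using lits_Pow by (rule sigma_algebra_sigma_sets)

lemma cyl_in: "set L \<subseteq> Npos \<times> Npos \<Longrightarrow> cyl L \<in> sigma_sets Baire lits"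
proof (induction L rule: cyl.induct)
  case 1
  then show ?case using sigma_sets_top by simp
next
  case (2 m n L)
  have "Bmn m n \<in> sigma_sets Baire lits" using 2 by (auto simp: lits_def)
  interpret S: sigma_algebra Baire "sigma_sets Baire lits" by (rule sa_lits)
  show ?case using 2 \<open>Bmn m n \<in> sigma_sets Baire lits\<close> S.Int by (metis cyl.simps(2) insert_subset list.simps(15))
qed

lemma top_Baire: "topspace Baire_top = Baire"
  by (simp add: Baire_top_def Baire_def topspace_product_topology)

lemma open_in_lits:
  assumes U: "openin Baire_top U"
  shows "U \<in> sigma_sets Baire lits"
proof -
  define X where "X = {L. set L \<subseteq> Npos \<times> Npos \<and> cyl L \<subseteq> U}"
  have cX: "countable X" by (rule countable_subset[of _ UNIV]) auto
  have "U \<subseteq> (\<Union>L\<in>X. cyl L)"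
  proof
    fix x assume x: "x \<in> U"
    have xB: "x \<in> Baire" using x openin_subset[OF U] top_Baire by auto
    obtain V where V: "finite {i \<in> Npos. V i \<noteq> Npos}" "x \<in> Pi\<^sub>E Npos V" "Pi\<^sub>E Npos V \<subseteq> U"
      using U x unfolding Baire_top_def openin_product_topology_alt by auto
    define F where "F = {i \<in> Npos. V i \<noteq> Npos}"
    define L where "L = map (\<lambda>i. (x i, i)) (sorted_list_of_set F)"
    have sL: "set L = (\<lambda>i. (x i, i)) ` F" using V(1) by (simp add: L_def F_def)
    have "set L \<subseteq> Npos \<times> Npos" using xB sL by (auto simp: F_def Baire_def)
    moreover have "cyl L \<subseteq> U"
    proof
      fix h assume "h \<in> cyl L"
      then have h: "h \<in> Baire" "\<And>i. i \<in> F \<Longrightarrow> h i = x i" by (auto simp: cyl_iff sL)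
      have "h \<in> Pi\<^sub>E Npos V"
      proof -
        have "h i \<in> V i" if i: "i \<in> Npos" for i
        proof (cases "i \<in> F")
          case True then show ?thesis using h(2) V(2) i by auto
        next
          case False then show ?thesis using h(1) i by (auto simp: F_def Baire_def)
        qed
        then show ?thesis using h(1) by (auto simp: Baire_def PiE_def)
      qed
      then show "h \<in> U" using V(3) by auto
    qed
    moreover have "x \<in> cyl L" using xB by (auto simp: cyl_iff sL)
    ultimately show "x \<in> (\<Union>L\<in>X. cyl L)" by (auto simp: X_def)
  qed
  moreover have "(\<Union>L\<in>X. cyl L) \<subseteq> U" by (auto simp: X_def)
  ultimately have eq: "U = (\<Union>L\<in>X. cyl L)" by blast
  interpret S: sigma_algebra Baire "sigma_sets Baire lits" by (rule sa_lits)
  have "(\<Union>L\<in>X. cyl L) \<in> sigma_sets Baire lits"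
    using cX cyl_in by (intro S.countable_UN'') (auto simp: X_def)
  then show ?thesis using eq by simp
qed

lemma Borel_lits: "Borel_Baire \<subseteq> sigma_sets Baire lits"
  unfolding Borel_Baire_def top_Baire using open_in_lits by (intro sigma_sets_mono) auto

context
  fixes pr :: "nat \<times> nat \<Rightarrow> nat"
  assumes bij: "bij_betw pr (Npos \<times> Npos) (Npos - {1})"
begin

lemma pr_in: "a \<in> Npos \<Longrightarrow> b \<in> Npos \<Longrightarrow> pr (a, b) \<in> Npos - {1}"
  using bij by (auto dest: bij_betw_apply)

lemma tup_Npos: "set xs \<subseteq> Npos \<Longrightarrow> tup pr xs \<in> Npos"
proof (induction xs)
  case (Cons a xs)
  then show ?case using pr_in[of a "tup pr xs"] by auto
qed (simp add: Npos_iff)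

lemma tup_inj: "set xs \<subseteq> Npos \<Longrightarrow> set ys \<subseteq> Npos \<Longrightarrow> tup pr xs = tup pr ys \<Longrightarrow> xs = ys"
proof (induction xs arbitrary: ys)
  case Nil
  then show ?case using pr_in tup_Npos by (cases ys) fastforce+
next
  case (Cons a as)
  show ?case
  proof (cases ys)
    case Nil
    then show ?thesis using Cons pr_in tup_Npos by fastforce
  next
    case (Cons b bs)
    have "(a, tup pr as) = (b, tup pr bs)"
      using bij Cons.prems Cons tup_Npos unfolding bij_betw_def inj_on_def
      by (metis SigmaI insert_subset list.simps(15) tup.simps(2))
    then show ?thesis using Cons.IH Cons.prems Cons by auto
  qed
qed

lemma untup_tup: "set xs \<subseteq> Npos \<Longrightarrow> untup pr (tup pr xs) = xs"
  unfolding untup_def by (rule the_equality) (auto intro: tup_inj)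


lemma semA_single: "untup pr c = [x] \<Longrightarrow> semA pr c = semScap pr x"
  unfolding semA_def by auto
lemma semScap_single: "untup pr c = [x] \<Longrightarrow> semScap pr c = Baire \<inter> semS' pr x"
  unfolding semScap_def by auto
lemma semScap_nil: "untup pr c = [] \<Longrightarrow> semScap pr c = Baire"
  unfolding semScap_def by auto
lemma semS'_code: "untup pr c = [a, m, n] \<Longrightarrow> semS' pr c =
   (if a = 1 then Baire - Bmn m n else if a = 2 then Bmn m n else {})"
  unfolding semS'_def by auto

lemma UN_single_list: "(\<Union>i<length [x]. h ([x] ! i)) = h x"
  by (auto simp: lessThan_Suc)

lemma semA_empty: "semA pr 1 = {}"
  using untup_tup[of "[]"] by (simp add: semA_def)

lemma semA_Baire: "semA pr (tup pr [tup pr []]) = Baire"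
proof -
  have u1: "untup pr (tup pr [tup pr []]) = [tup pr []]" using untup_tup[of "[tup pr []]"] by (simp add: Npos_iff)
  have u2: "untup pr (tup pr []) = []" using untup_tup[of "[]"] by simp
  show ?thesis using semA_single[OF u1] semScap_nil[OF u2] by simp
qed

lemma semA_lit:
  assumes "m \<in> Npos" "n \<in> Npos" "a \<in> {1,2}"
  shows "semA pr (tup pr [tup pr [tup pr [a, m, n]]]) = (if a = 1 then Baire - Bmn m n else Bmn m n)"
proof -
  have a: "a \<in> Npos" using assms(3) by (auto simp: Npos_iff)
  have k: "tup pr [a, m, n] \<in> Npos" using a assms tup_Npos[of "[a,m,n]"] by auto
  have k2: "tup pr [tup pr [a, m, n]] \<in> Npos" using k tup_Npos[of "[tup pr [a,m,n]]"] by auto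
  have u1: "untup pr (tup pr [tup pr [tup pr [a, m, n]]]) = [tup pr [tup pr [a, m, n]]]"
    using k2 untup_tup[of "[tup pr [tup pr [a, m, n]]]"] by simp
  have u2: "untup pr (tup pr [tup pr [a, m, n]]) = [tup pr [a, m, n]]"
    using k untup_tup[of "[tup pr [a, m, n]]"] by simp
  have u3: "untup pr (tup pr [a, m, n]) = [a, m, n]"
    using a assms untup_tup[of "[a,m,n]"] by simp
  have "Bmn m n \<subseteq> Baire" by (auto simp: Bmn_def)
  then show ?thesis using assms(3) semA_single[OF u1] semScap_single[OF u2] semS'_code[OF u3]
    by auto
qed

definition comb :: "nat \<Rightarrow> (nat \<Rightarrow> nat \<Rightarrow> nat) \<Rightarrow> nat \<Rightarrow> nat" where
  "comb c F x = (if x = 1 then c else if x \<in> Npos then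
      (case inv_into (Npos \<times> Npos) pr x of (a, b) \<Rightarrow> F a b) else undefined)"

lemma comb_1: "comb c F 1 = c" by (simp add: comb_def)

lemma comb_sect:
  assumes "n \<in> Npos" "F n \<in> Baire"
  shows "sect pr (comb c F) n = F n"
proof (rule ext)
  fix m
  show "sect pr (comb c F) n m = F n m"
  proof (cases "m \<in> Npos")
    case True
    have p: "pr (n, m) \<in> Npos - {1}" using pr_in assms True by blast
    have "inv_into (Npos \<times> Npos) pr (pr (n, m)) = (n, m)"
      using bij assms True by (simp add: bij_betw_def inv_into_f_f)
    then show ?thesis using p True by (simp add: sect_def comb_def)
  next
    case False
    then show ?thesis using assms(2) by (simp add: sect_def Baire_def PiE_def extensional_def)
  qed
qed

lemma comb_Baire:
  assumes "c \<in> Npos" "\<And>n. n \<in> Npos \<Longrightarrow> F n \<in> Baire"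
  shows "comb c F \<in> Baire"
proof -
  have "comb c F x \<in> Npos" if x: "x \<in> Npos" for x
  proof (cases "x = 1")
    case True then show ?thesis using assms by (simp add: comb_def)
  next
    case False
    then have "x \<in> pr ` (Npos \<times> Npos)" using bij x by (simp add: bij_betw_def)
    then have "inv_into (Npos \<times> Npos) pr x \<in> Npos \<times> Npos" by (rule inv_into_into)
    then obtain a b where ab: "inv_into (Npos \<times> Npos) pr x = (a, b)" "a \<in> Npos" "b \<in> Npos" by auto
    then have "F a b \<in> Npos" using assms(2)[of a] by (auto simp: Baire_def)
    then show ?thesis using False x ab by (simp add: comb_def)
  qed
  moreover have "comb c F x = undefined" if "x \<notin> Npos" for x
    using that by (auto simp: comb_def Npos_iff)
  ultimately show ?thesis by (auto simp: Baire_def PiE_def extensional_def)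
qed

definition PiRep :: "(nat \<Rightarrow> nat) set \<Rightarrow> bool" where
  "PiRep A \<longleftrightarrow> (\<exists>f\<in>Stp pr. \<exists>g\<in>Baire. g 1 = 1 \<and> (\<exists>S. SemPS pr f g A S))"
definition SigRep :: "(nat \<Rightarrow> nat) set \<Rightarrow> bool" where
  "SigRep A \<longleftrightarrow> (\<exists>f\<in>Stp pr. \<exists>g\<in>Baire. g 1 = 1 \<and> (\<exists>P. SemPS pr f g P A))"

lemma leaf_rep:
  assumes c: "c \<in> Npos"
  shows "PiRep (semA pr c) \<and> SigRep (semA pr c)"
proof -
  define f :: "nat \<Rightarrow> nat" where "f = (\<lambda>x. if x \<in> Npos then 2 else undefined)"
  define g :: "nat \<Rightarrow> nat" where "g = (\<lambda>x. if x \<in> Npos then (if x = 1 then 1 else c) else undefined)"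
  have fB: "f \<in> Baire" by (auto simp: f_def Baire_def Npos_iff)
  have f1: "f 1 \<noteq> 1" by (simp add: f_def Npos_iff)
  have fS: "f \<in> Stp pr" using fB f1 by (rule Stp.leaf)
  have gB: "g \<in> Baire" using c by (auto simp: g_def Baire_def Npos_iff)
  have g1: "g 1 = 1" by (simp add: g_def Npos_iff)
  have "SemPS pr f g (\<Inter>n\<in>Npos - {1}. semA pr (g n)) (\<Union>n\<in>Npos - {1}. semA pr (g n))"
    using f1 by (rule SemPS.leaf)
  moreover have "(\<Inter>n\<in>Npos - {1}. semA pr (g n)) = semA pr c"
    "(\<Union>n\<in>Npos - {1}. semA pr (g n)) = semA pr c"
  proof -
    have 2: "(2::nat) \<in> Npos - {1}" by (simp add: Npos_iff)
    have "\<And>n. n \<in> Npos - {1} \<Longrightarrow> g n = c" by (simp add: g_def)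
    then show "(\<Inter>n\<in>Npos - {1}. semA pr (g n)) = semA pr c"
      "(\<Union>n\<in>Npos - {1}. semA pr (g n)) = semA pr c" using 2 by auto
  qed
  ultimately show ?thesis using fS gB g1 unfolding PiRep_def SigRep_def by metis
qed

lemma union_rep:
  fixes A :: "nat \<Rightarrow> (nat \<Rightarrow> nat) set"
  assumes "\<And>k. PiRep (A k)"
  shows "SigRep (\<Union>k. A k)"
proof -
  have "\<forall>k. \<exists>f g S. f \<in> Stp pr \<and> g \<in> Baire \<and> SemPS pr f g (A k) S"
    using assms unfolding PiRep_def by metis
  then obtain F G SS where FG: "\<And>k. F k \<in> Stp pr" "\<And>k. G k \<in> Baire"
    "\<And>k. SemPS pr (F k) (G k) (A k) (SS k)" by metis
  define f where "f = comb 1 (\<lambda>n. F (n - 1))"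
  define g where "g = comb 1 (\<lambda>n. G (n - 1))"
  have 1: "(1::nat) \<in> Npos" by (simp add: Npos_iff)
  have fB: "f \<in> Baire" unfolding f_def using 1 FG(1) Stp_Baire by (intro comb_Baire) auto
  have gB: "g \<in> Baire" unfolding g_def using 1 FG(2) by (intro comb_Baire) auto
  have sf: "\<And>n. n \<in> Npos \<Longrightarrow> sect pr f n = F (n - 1)"
    unfolding f_def using FG(1) Stp_Baire by (intro comb_sect) auto
  have sg: "\<And>n. n \<in> Npos \<Longrightarrow> sect pr g n = G (n - 1)"
    unfolding g_def using FG(2) by (intro comb_sect) auto
  have f1: "f 1 = 1" "g 1 = 1" by (simp_all add: f_def g_def comb_def)
  have fS: "f \<in> Stp pr" using fB f1 sf FG(1) by (intro Stp.node) auto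
  have "SemPS pr f g (\<Inter>n\<in>Npos. SS (n - 1)) (\<Union>n\<in>Npos. A (n - 1))"
    using f1 sf sg FG(3) by (intro SemPS.node) auto
  moreover have "(\<Union>n\<in>Npos. A (n - 1)) = (\<Union>k. A k)"
  proof -
    have "(\<lambda>n. n - 1) ` Npos = UNIV"
    proof (intro set_eqI iffI)
      fix x :: nat
      have "Suc x \<in> Npos" by (simp add: Npos_iff)
      then show "x \<in> (\<lambda>n. n - 1) ` Npos" by (metis diff_Suc_1 imageI)
    qed auto
    then show ?thesis by (metis UN_extend_simps(10))
  qed
  ultimately show ?thesis using fS gB f1 unfolding SigRep_def by metis
qed

lemma inter_rep:
  fixes A :: "nat \<Rightarrow> (nat \<Rightarrow> nat) set"
  assumes "\<And>k. SigRep (A k)"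
  shows "PiRep (\<Inter>k. A k)"
proof -
  have "\<forall>k. \<exists>f g P. f \<in> Stp pr \<and> g \<in> Baire \<and> SemPS pr f g P (A k)"
    using assms unfolding SigRep_def by metis
  then obtain F G PP where FG: "\<And>k. F k \<in> Stp pr" "\<And>k. G k \<in> Baire"
    "\<And>k. SemPS pr (F k) (G k) (PP k) (A k)" by metis
  define f where "f = comb 1 (\<lambda>n. F (n - 1))"
  define g where "g = comb 1 (\<lambda>n. G (n - 1))"
  have 1: "(1::nat) \<in> Npos" by (simp add: Npos_iff)
  have fB: "f \<in> Baire" unfolding f_def using 1 FG(1) Stp_Baire by (intro comb_Baire) auto
  have gB: "g \<in> Baire" unfolding g_def using 1 FG(2) by (intro comb_Baire) auto
  have sf: "\<And>n. n \<in> Npos \<Longrightarrow> sect pr f n = F (n - 1)"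
    unfolding f_def using FG(1) Stp_Baire by (intro comb_sect) auto
  have sg: "\<And>n. n \<in> Npos \<Longrightarrow> sect pr g n = G (n - 1)"
    unfolding g_def using FG(2) by (intro comb_sect) auto
  have f1: "f 1 = 1" "g 1 = 1" by (simp_all add: f_def g_def comb_def)
  have fS: "f \<in> Stp pr" using fB f1 sf FG(1) by (intro Stp.node) auto
  have "SemPS pr f g (\<Inter>n\<in>Npos. A (n - 1)) (\<Union>n\<in>Npos. PP (n - 1))"
    using f1 sf sg FG(3) by (intro SemPS.node) auto
  moreover have "(\<Inter>n\<in>Npos. A (n - 1)) = (\<Inter>k. A k)"
  proof -
    have "(\<lambda>n. n - 1) ` Npos = UNIV"
    proof (intro set_eqI iffI)
      fix x :: nat
      have "Suc x \<in> Npos" by (simp add: Npos_iff)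
      then show "x \<in> (\<lambda>n. n - 1) ` Npos" by (metis diff_Suc_1 imageI)
    qed auto
    then show ?thesis by (metis INT_extend_simps(10))
  qed
  ultimately show ?thesis using fS gB f1 unfolding PiRep_def by metis
qed

lemma Pi_Sig: "PiRep A \<Longrightarrow> SigRep A"
  using union_rep[of "\<lambda>_. A"] by simp
lemma Sig_Pi: "SigRep A \<Longrightarrow> PiRep A"
  using inter_rep[of "\<lambda>_. A"] by simp


definition Q :: "(nat \<Rightarrow> nat) set \<Rightarrow> bool" where
  "Q A \<longleftrightarrow> PiRep A \<and> SigRep A"

lemma Q_semA: "c \<in> Npos \<Longrightarrow> Q (semA pr c)"
  using leaf_rep by (simp add: Q_def)

lemma Q_empty: "Q {}"
  using Q_semA[of 1] semA_empty by (simp add: Npos_iff)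

lemma Q_Baire: "Q Baire"
proof -
  have "tup pr [tup pr []] \<in> Npos" using tup_Npos[of "[tup pr []]"] by (simp add: Npos_iff)
  then show ?thesis using Q_semA semA_Baire by metis
qed

lemma Q_lit:
  assumes "m \<in> Npos" "n \<in> Npos"
  shows "Q (Bmn m n)" "Q (Baire - Bmn m n)"
proof -
  have c: "tup pr [tup pr [tup pr [a, m, n]]] \<in> Npos" if "a \<in> {1,2}" for a
  proof -
    have "tup pr [a, m, n] \<in> Npos" using assms that tup_Npos[of "[a,m,n]"] by (auto simp: Npos_iff)
    then have "tup pr [tup pr [a, m, n]] \<in> Npos" using tup_Npos[of "[tup pr [a,m,n]]"] by auto
    then show ?thesis using tup_Npos[of "[tup pr [tup pr [a,m,n]]]"] by auto
  qed
  show "Q (Bmn m n)" using Q_semA[OF c[of 2]] semA_lit[OF assms, of 2] by simp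
  show "Q (Baire - Bmn m n)" using Q_semA[OF c[of 1]] semA_lit[OF assms, of 1] by simp
qed

lemma Q_Un: "(\<And>k::nat. Q (A k)) \<Longrightarrow> Q (\<Union>k. A k)"
  using union_rep[of A] Sig_Pi unfolding Q_def by blast

lemma Q_Int: "(\<And>k::nat. Q (A k)) \<Longrightarrow> Q (\<Inter>k. A k)"
  using inter_rep[of A] Pi_Sig unfolding Q_def by blast

lemma lits_Q: "A \<in> sigma_sets Baire lits \<Longrightarrow> A \<subseteq> Baire \<and> Q A \<and> Q (Baire - A)"
proof (induction rule: sigma_sets.induct)
  case (Basic a)
  then show ?case using Q_lit by (auto simp: lits_def Bmn_def)
next
  case Empty
  then show ?case using Q_empty Q_Baire by simp
next
  case (Compl a)
  then show ?case by (simp add: Diff_Diff_Int Int_absorb1)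
next
  case (Union A)
  have "Baire - (\<Union>i. A i) = (\<Inter>i. Baire - A i)" by auto
  then show ?case using Union Q_Un[of A] Q_Int[of "\<lambda>i. Baire - A i"] by auto
qed

lemma main:
  assumes "A \<in> Borel_Baire"
  shows "\<exists>g\<in>Baire. \<exists>f\<in>Stp pr. A = semB pr f g"
proof -
  have "SigRep A" using lits_Q Borel_lits assms unfolding Q_def by blast
  then obtain f g P where fg: "f \<in> Stp pr" "g \<in> Baire" "g 1 = 1" "SemPS pr f g P A"
    unfolding SigRep_def by blast
  have "semSigma pr f g = A"
    unfolding semSigma_def using fg(4) SemPS_unique by (intro the_equality) blast+
  then have "A = semB pr f g" using fg(3) by (simp add: semB_def)
  then show ?thesis using fg by blast
qed

end

theorem proposition5p19:
  fixes pr :: "nat \<times> nat \<Rightarrow> nat" and A :: "(nat \<Rightarrow> nat) set"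
  assumes "bij_betw pr (Npos \<times> Npos) (Npos - {1})"
    and "A \<in> Borel_Baire"
  shows "\<exists>g\<in>Baire. \<exists>f\<in>Stp pr. A = semB pr f g"
  using main[OF assms] .

end
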